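(* Given a requirement with an $\mathbf{exist}$ $count\_exp$ operation, the minimal counting information of a node $u$ in the DVNet is $\min(\mathbf{c}_u)$ if $count\_exp$ is $\geq N$ or $> N$; it is $\max(\mathbf{c}_u)$ if $count\_exp$ is $\leq N$ or $< N$; and it is the first $\min(|\mathbf{c}_u|, 2)$ smallest elements in $\mathbf{c}_u$ if $count\_exp$ is $== N$.
   Context: A DVNet is a directed acyclic graph, obtained by multiplying the finite automaton of a regular expression $path\_exp$ (over device identifiers) with the network topology, that compactly represents all paths in the network matching $path\_exp$; each DVNet node $u$ corresponds to a device $u.dev$. For a packet $p$, each node $u$ computes a set $\mathbf{c}_u$ of non-negative integers: the distinct numbers, across $p$'s universes (possible sets of packet traces due to ANY-type forwarding actions), of copies of $p$ that can be delivered from $u$ to the destination node along DVNet paths by the network data plane. A destination node has count set $\{1\}$. If $u.dev$ forwards $p$ with an ALL-type action (copy to every next-hop in the group), $\mathbf{c}_u$ is the cross-product sum $\{a+b \mid a\in\mathbf{c}_1, b\in\mathbf{c}_2\}$ (iterated) of the count sets of the downstream neighbors $v_j$ of $u$ whose devices are among the next-hops; if the action is ANY-type (one of the next-hops), $\mathbf{c}_u$ is the union of those sets, additionally including $0$ if $u.dev$ may forward $p$ to a device with no corresponding downstream DVNet node. A requirement with operator $\mathbf{exist}$ $count\_exp$ (where $count\_exp$ is one of $== N$, $\geq N$, $> N$, $\leq N$, $< N$) requires that in every universe the number of traces of $p$ matching $path\_exp$ satisfies $count\_exp$. The minimal counting information of $u$ is defined as the minimal set of elements of $\mathbf{c}_u$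 that $u.dev$ needs to send to the devices of $u$'s upstream neighbors so that the source node of the DVNet can correctly verify the requirement, assuming arbitrary data planes at devices. *)

theory Defs
  imports Main
begin

datatype count_op = CEq | CGe | CGt | CLe | CLt

fun count_sat :: "count_op \<Rightarrow> nat \<Rightarrow> nat \<Rightarrow> bool" where
  "count_sat CEq N k = (k = N)"
| "count_sat CGe N k = (k \<ge> N)"
| "count_sat CGt N k = (k > N)"
| "count_sat CLe N k = (k \<le> N)"
| "count_sat CLt N k = (k < N)"

definition cross_sum :: "nat set \<Rightarrow> nat set \<Rightarrow> nat set" where
  "cross_sum A B = {a + b | a b. a \<in> A \<and> b \<in> B}"

(* An upstream context: how the count set of the source node is computed from the
   count set of u (the Hole, possibly occurring several times, since the DVNet is a DAG)
   and arbitrary count sets of other nodes (Const), via ALL-type cross-product sums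
   and ANY-type unions (union with {0} models the extra 0). *)
datatype ctx = Hole | Const "nat set" | CSum ctx ctx | CUnion ctx ctx

fun ctx_eval :: "ctx \<Rightarrow> nat set \<Rightarrow> nat set" where
  "ctx_eval Hole X = X"
| "ctx_eval (Const S) X = S"
| "ctx_eval (CSum e1 e2) X = cross_sum (ctx_eval e1 X) (ctx_eval e2 X)"
| "ctx_eval (CUnion e1 e2) X = ctx_eval e1 X \<union> ctx_eval e2 X"

(* arbitrary data planes: other count sets are arbitrary finite nonempty sets *)
fun ctx_wf :: "ctx \<Rightarrow> bool" where
  "ctx_wf Hole = True"
| "ctx_wf (Const S) = (finite S \<and> S \<noteq> {})"
| "ctx_wf (CSum e1 e2) = (ctx_wf e1 \<and> ctx_wf e2)"
| "ctx_wf (CUnion e1 e2) = (ctx_wf e1 \<and> ctx_wf e2)"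

definition verifies :: "count_op \<Rightarrow> nat \<Rightarrow> nat set \<Rightarrow> bool" where
  "verifies op N C = (\<forall>k\<in>C. count_sat op N k)"

(* sending T (instead of c) lets the source verify correctly, for arbitrary data planes
   elsewhere (and the bound N of the given operator arbitrary) *)
definition sufficient_info :: "count_op \<Rightarrow> nat set \<Rightarrow> nat set \<Rightarrow> bool" where
  "sufficient_info op c T =
     (\<forall>N e. ctx_wf e \<longrightarrow> (verifies op N (ctx_eval e T) = verifies op N (ctx_eval e c)))"

definition minimal_info :: "count_op \<Rightarrow> nat set \<Rightarrow> nat set \<Rightarrow> bool" where
  "minimal_info op c T =
     (T \<subseteq> c \<and> sufficient_info op c T \<and>
      (\<forall>T'. T' \<subseteq> c \<longrightarrow> sufficient_info op c T' \<longrightarrow> card T \<le> card T'))"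

definition smallest :: "nat \<Rightarrow> nat set \<Rightarrow> nat set" where
  "smallest k c = set (take k (sorted_list_of_set c))"

end

theory Submission
  imports Defs
begin

lemma cs_img: "cross_sum A B = (\<lambda>(a,b). a+b) ` (A \<times> B)"
  by (auto simp: cross_sum_def)

lemma cs_fin: "finite A \<Longrightarrow> finite B \<Longrightarrow> finite (cross_sum A B)"
  by (simp add: cs_img)

lemma cs_ne: "A \<noteq> {} \<Longrightarrow> B \<noteq> {} \<Longrightarrow> cross_sum A B \<noteq> {}"
  by (auto simp: cs_img)

lemma cs_Min: "finite A \<Longrightarrow> finite B \<Longrightarrow> A \<noteq> {} \<Longrightarrow> B \<noteq> {} \<Longrightarrow>
  Min (cross_sum A B) = Min A + (Min B::nat)"
proof -
  assume a: "finite A" "finite B" "A \<noteq> {}" "B \<noteq> {}"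
  have "Min A \<in> A" "Min B \<in> B" using a by auto
  then have m: "Min A + Min B \<in> cross_sum A B" unfolding cross_sum_def by blast
  show ?thesis
  proof (rule Min_eqI)
    show "finite (cross_sum A B)" using a cs_fin by auto
    show "Min A + Min B \<in> cross_sum A B" by (rule m)
    fix y assume "y \<in> cross_sum A B"
    then obtain x z where "y = x + z" "x \<in> A" "z \<in> B" by (auto simp: cross_sum_def)
    then show "Min A + Min B \<le> y" using a by (simp add: add_mono)
  qed
qed

lemma cs_Max: "finite A \<Longrightarrow> finite B \<Longrightarrow> A \<noteq> {} \<Longrightarrow> B \<noteq> {} \<Longrightarrow>
  Max (cross_sum A B) = Max A + (Max B::nat)"
proof -
  assume a: "finite A" "finite B" "A \<noteq> {}" "B \<noteq> {}"
  have "Max A \<in> A" "Max B \<in> B" using a by auto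
  then have m: "Max A + Max B \<in> cross_sum A B" unfolding cross_sum_def by blast
  show ?thesis
  proof (rule Max_eqI)
    show "finite (cross_sum A B)" using a cs_fin by auto
    show "Max A + Max B \<in> cross_sum A B" by (rule m)
    fix y assume "y \<in> cross_sum A B"
    then obtain x z where "y = x + z" "x \<in> A" "z \<in> B" by (auto simp: cross_sum_def)
    then show "y \<le> Max A + Max B" using a by (simp add: add_mono)
  qed
qed

lemma ev_mono: "X \<subseteq> Y \<Longrightarrow> ctx_eval e X \<subseteq> ctx_eval e Y"
  by (induction e) (auto simp: cross_sum_def)

lemma ev_fin: "ctx_wf e \<Longrightarrow> finite X \<Longrightarrow> X \<noteq> {} \<Longrightarrow>
  finite (ctx_eval e X) \<and> ctx_eval e X \<noteq> {}"
  by (induction e) (auto simp: cs_fin cs_ne)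

lemma ev_Min: "ctx_wf e \<Longrightarrow> finite X \<Longrightarrow> X \<noteq> {} \<Longrightarrow>
  Min (ctx_eval e {Min X}) = Min (ctx_eval e X)"
proof (induction e)
  case (CSum e1 e2)
  then show ?case using ev_fin[of e1 X] ev_fin[of e2 X] ev_fin[of e1 "{Min X}"] ev_fin[of e2 "{Min X}"]
    by (simp add: cs_Min)
next
  case (CUnion e1 e2)
  then show ?case using ev_fin[of e1 X] ev_fin[of e2 X] ev_fin[of e1 "{Min X}"] ev_fin[of e2 "{Min X}"]
    by (simp add: Min_Un)
qed auto

lemma ev_Max: "ctx_wf e \<Longrightarrow> finite X \<Longrightarrow> X \<noteq> {} \<Longrightarrow>
  Max (ctx_eval e {Max X}) = Max (ctx_eval e X)"
proof (induction e)
  case (CSum e1 e2)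
  then show ?case using ev_fin[of e1 X] ev_fin[of e2 X] ev_fin[of e1 "{Max X}"] ev_fin[of e2 "{Max X}"]
    by (simp add: cs_Max)
next
  case (CUnion e1 e2)
  then show ?case using ev_fin[of e1 X] ev_fin[of e2 X] ev_fin[of e1 "{Max X}"] ev_fin[of e2 "{Max X}"]
    by (simp add: Max_Un)
qed auto

lemma ev_two: "ctx_wf e \<Longrightarrow> finite X \<Longrightarrow> X \<noteq> {} \<Longrightarrow> a \<in> X \<Longrightarrow> b \<in> X \<Longrightarrow> a \<noteq> b \<Longrightarrow>
  ctx_eval e X = ctx_eval e Y \<or> (\<exists>x y. x \<noteq> y \<and> x \<in> ctx_eval e X \<and> y \<in> ctx_eval e X)"
proof (induction e)
  case Hole
  then show ?case by auto
next
  case (CSum e1 e2)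
  have n1: "ctx_eval e1 X \<noteq> {}" and n2: "ctx_eval e2 X \<noteq> {}"
    using ev_fin[of e1 X] ev_fin[of e2 X] CSum.prems by auto
  from CSum have I1: "ctx_eval e1 X = ctx_eval e1 Y \<or> (\<exists>x y. x \<noteq> y \<and> x \<in> ctx_eval e1 X \<and> y \<in> ctx_eval e1 X)"
    and I2: "ctx_eval e2 X = ctx_eval e2 Y \<or> (\<exists>x y. x \<noteq> y \<and> x \<in> ctx_eval e2 X \<and> y \<in> ctx_eval e2 X)"
    by auto
  show ?case
  proof (cases "ctx_eval e1 X = ctx_eval e1 Y \<and> ctx_eval e2 X = ctx_eval e2 Y")
    case True then show ?thesis by simp
  next
    case False
    show ?thesis
    proof (cases "ctx_eval e1 X = ctx_eval e1 Y")
      case True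
      with False I2 obtain x y where "x \<noteq> y" "x \<in> ctx_eval e2 X" "y \<in> ctx_eval e2 X" by auto
      moreover obtain z where "z \<in> ctx_eval e1 X" using n1 by auto
      ultimately have "z + x \<in> ctx_eval (CSum e1 e2) X" "z + y \<in> ctx_eval (CSum e1 e2) X" "z + x \<noteq> z + y"
        by (auto simp: cross_sum_def)
      then show ?thesis by blast
    next
      case F: False
      with I1 obtain x y where "x \<noteq> y" "x \<in> ctx_eval e1 X" "y \<in> ctx_eval e1 X" by auto
      moreover obtain z where "z \<in> ctx_eval e2 X" using n2 by auto
      ultimately have "x + z \<in> ctx_eval (CSum e1 e2) X" "y + z \<in> ctx_eval (CSum e1 e2) X" "x + z \<noteq> y + z"
        by (auto simp: cross_sum_def)
      then show ?thesis by blast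
    qed
  qed
next
  case (CUnion e1 e2)
  then show ?case by auto
qed auto

lemma ver_Ge: "finite C \<Longrightarrow> C \<noteq> {} \<Longrightarrow> verifies CGe N C = (N \<le> Min C)"
  by (auto simp: verifies_def)
lemma ver_Gt: "finite C \<Longrightarrow> C \<noteq> {} \<Longrightarrow> verifies CGt N C = (N < Min C)"
  by (auto simp: verifies_def)
lemma ver_Le: "finite C \<Longrightarrow> C \<noteq> {} \<Longrightarrow> verifies CLe N C = (Max C \<le> N)"
  by (auto simp: verifies_def)
lemma ver_Lt: "finite C \<Longrightarrow> C \<noteq> {} \<Longrightarrow> verifies CLt N C = (Max C < N)"
  by (auto simp: verifies_def)

lemma nonempty_needed:
  assumes "finite c" "c \<noteq> {}" "sufficient_info op c T'"
  shows "T' \<noteq> {}"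
proof
  assume T: "T' = {}"
  show False
  proof (cases "op \<in> {CLe, CLt}")
    case True
    have "verifies op 0 (ctx_eval (CSum Hole (Const {1})) T') = verifies op 0 (ctx_eval (CSum Hole (Const {1})) c)"
      using assms(3) unfolding sufficient_info_def by (metis ctx_wf.simps(1,2,3) finite.intros insert_not_empty)
    moreover obtain x where "x \<in> c" using assms by auto
    ultimately show False using T True
      by (auto simp: verifies_def cross_sum_def)
  next
    case False
    have "verifies op (Max c + 1) (ctx_eval Hole T') = verifies op (Max c + 1) (ctx_eval Hole c)"
      using assms(3) unfolding sufficient_info_def by (meson ctx_wf.simps(1))
    moreover have "Max c \<in> c" using assms by simp
    ultimately show False using T False
      by (cases op) (auto simp: verifies_def)
  qed
qed

lemma card_ge1: "finite c \<Longrightarrow> c \<noteq> {} \<Longrightarrow> T' \<subseteq> c \<Longrightarrow> sufficient_info op c T' \<Longrightarrow> 1 \<le> card T'"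
  using nonempty_needed[of c op T']
  by (metis One_nat_def Suc_leI card_gt_0_iff finite_subset)

lemma smallest_props:
  assumes "finite c"
  shows "smallest k c \<subseteq> c" "card (smallest k c) = min k (card c)"
proof -
  show "smallest k c \<subseteq> c" unfolding smallest_def using assms
    by (metis set_sorted_list_of_set set_take_subset)
  have "distinct (take k (sorted_list_of_set c))" by simp
  then show "card (smallest k c) = min k (card c)" unfolding smallest_def
    by (simp add: distinct_card)
qed

theorem proposition1:
  fixes c :: "nat set" and op :: count_op
  assumes "finite c" and "c \<noteq> {}"
  shows "(op \<in> {CGe, CGt} \<longrightarrow> minimal_info op c {Min c})
       \<and> (op \<in> {CLe, CLt} \<longrightarrow> minimal_info op c {Max c})
       \<and> (op = CEq \<longrightarrow> minimal_info op c (smallest (min (card c) 2) c))"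
proof (intro conjI impI)
  assume op: "op \<in> {CGe, CGt}"
  have "sufficient_info op c {Min c}"
    unfolding sufficient_info_def
  proof (intro allI impI)
    fix N e assume "ctx_wf e"
    then show "verifies op N (ctx_eval e {Min c}) = verifies op N (ctx_eval e c)"
    proof -
      have "finite (ctx_eval e c) \<and> ctx_eval e c \<noteq> {}" "finite (ctx_eval e {Min c}) \<and> ctx_eval e {Min c} \<noteq> {}"
        "Min (ctx_eval e {Min c}) = Min (ctx_eval e c)"
        using ev_Min[of e c] ev_fin[of e c] ev_fin[of e "{Min c}"] assms \<open>ctx_wf e\<close> by auto
      then show ?thesis using op ver_Ge[of "ctx_eval e c" N] ver_Ge[of "ctx_eval e {Min c}" N]
        ver_Gt[of "ctx_eval e c" N] ver_Gt[of "ctx_eval e {Min c}" N] by auto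
    qed
  qed
  then show "minimal_info op c {Min c}"
    unfolding minimal_info_def using assms card_ge1[of c] by auto
next
  assume op: "op \<in> {CLe, CLt}"
  have "sufficient_info op c {Max c}"
    unfolding sufficient_info_def
  proof (intro allI impI)
    fix N e assume "ctx_wf e"
    then show "verifies op N (ctx_eval e {Max c}) = verifies op N (ctx_eval e c)"
    proof -
      have "finite (ctx_eval e c) \<and> ctx_eval e c \<noteq> {}" "finite (ctx_eval e {Max c}) \<and> ctx_eval e {Max c} \<noteq> {}"
        "Max (ctx_eval e {Max c}) = Max (ctx_eval e c)"
        using ev_Max[of e c] ev_fin[of e c] ev_fin[of e "{Max c}"] assms \<open>ctx_wf e\<close> by auto
      then show ?thesis using op ver_Le[of "ctx_eval e c" N] ver_Le[of "ctx_eval e {Max c}" N]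
        ver_Lt[of "ctx_eval e c" N] ver_Lt[of "ctx_eval e {Max c}" N] by auto
    qed
  qed
  then show "minimal_info op c {Max c}"
    unfolding minimal_info_def using assms card_ge1[of c] by auto
next
  assume op: "op = CEq"
  define T where "T = smallest (min (card c) 2) c"
  have Tc: "T \<subseteq> c" and cT: "card T = min (card c) 2"
    using smallest_props[OF assms(1)] unfolding T_def by auto
  have cpos: "card c \<ge> 1" using assms by (simp add: Suc_leI card_gt_0_iff)
  have fT: "finite T" using Tc assms finite_subset by auto
  have suff: "sufficient_info op c T"
  proof (cases "card c = 1")
    case True
    then have "T = c" using Tc cT assms by (simp add: card_subset_eq)
    then show ?thesis by (simp add: sufficient_info_def)
  next
    case False
    then have "card T = 2" using cT cpos by auto
    then obtain a b where ab: "T = {a, b}" "a \<noteq> b" by (meson card_2_iff)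
    show ?thesis unfolding sufficient_info_def
    proof (intro allI impI)
      fix N e assume wf: "ctx_wf e"
      have "ctx_eval e T = ctx_eval e c \<or> (\<exists>x y. x \<noteq> y \<and> x \<in> ctx_eval e T \<and> y \<in> ctx_eval e T)"
        using ev_two[OF wf fT, of a b c] ab by auto
      moreover have "ctx_eval e T \<subseteq> ctx_eval e c" using ev_mono[OF Tc] .
      moreover have "\<not> verifies op N (ctx_eval e T)" if "x \<noteq> y" "x \<in> ctx_eval e T" "y \<in> ctx_eval e T" for x y
        using that op unfolding verifies_def by (cases "x = N") auto
      moreover have "verifies op N (ctx_eval e c) \<Longrightarrow> verifies op N (ctx_eval e T)"
        using \<open>ctx_eval e T \<subseteq> ctx_eval e c\<close> by (auto simp: verifies_def)
      ultimately show "verifies op N (ctx_eval e T) = verifies op N (ctx_eval e c)"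
        by metis
    qed
  qed
  have mini: "card T \<le> card T'" if "T' \<subseteq> c" "sufficient_info op c T'" for T'
  proof (cases "card c = 1")
    case True then show ?thesis using cT card_ge1[OF assms that] by simp
  next
    case False
    then have c2: "card c \<ge> 2" using cpos by auto
    have fT': "finite T'" using that assms finite_subset by auto
    have "card T' \<noteq> 1"
    proof
      assume "card T' = 1"
      then obtain x where x: "T' = {x}" by (meson card_1_singletonE)
      have "verifies op x (ctx_eval Hole T') = verifies op x (ctx_eval Hole c)"
        using that(2) unfolding sufficient_info_def by (meson ctx_wf.simps(1))
      then have "c \<subseteq> {x}" using x op by (auto simp: verifies_def)
      then have "card c \<le> 1" by (metis card.empty card.insert empty_iff finite.intros(1) card_mono finite.intros(2) One_nat_def)
      then show False using c2 by simp
    qed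
    then show ?thesis using cT card_ge1[OF assms that] by simp
  qed
  show "minimal_info op c (smallest (min (card c) 2) c)"
    unfolding minimal_info_def T_def[symmetric] using Tc suff mini by auto
qed

end
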